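(* Let $q$ be a prime power and let $\mathcal{H}_q$ be the Hermitian unital. If $s \geq 3$ lines of $\mathcal{H}_q$ pairwise intersect, then either all of them contain a common point of $\mathcal{H}_q$, or they form an $s$-fan.
   Context: The Hermitian unital $\mathcal{H}_q$ is the partial linear space whose point set is $P(\mathcal{H}_q)=\{\langle x,y,z\rangle \subset \mathbb{F}_{q^2}^3 : x^{q+1}+y^{q+1}+z^{q+1}=0\}$ (points of the projective plane $\mathrm{PG}(2,q^2)$, i.e. one-dimensional subspaces of $\mathbb{F}_{q^2}^3$), and whose lines are the intersections with $P(\mathcal{H}_q)$ of those lines of $\mathrm{PG}(2,q^2)$ meeting $P(\mathcal{H}_q)$ in exactly $q+1$ points (every line of $\mathrm{PG}(2,q^2)$ meets $P(\mathcal{H}_q)$ in $1$ or $q+1$ points). For $s \geq 3$, an $s$-fan is a set of $s$ pairwise intersecting lines such that $s-1$ of the lines all pass through a common point while the remaining line does not pass through that point. *)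

theory Defs
  imports "HOL-Computational_Algebra.Primes" "HOL-Library.Cardinality"
begin

type_synonym 'a vec3 = "'a \<times> 'a \<times> 'a"

definition prime_power :: "nat \<Rightarrow> bool" where
  "prime_power q \<longleftrightarrow> (\<exists>p k. prime p \<and> k \<ge> 1 \<and> q = p ^ k)"

definition span1 :: "'a::field vec3 \<Rightarrow> 'a vec3 set" where
  "span1 v = (\<lambda>c. (c * fst v, c * fst (snd v), c * snd (snd v))) ` UNIV"

definition pg_points :: "'a::field vec3 set set" where
  "pg_points = {span1 v | v. v \<noteq> (0, 0, 0)}"

text \<open>Hermitian form x^(q+1)+y^(q+1)+z^(q+1); the field is F_{q^2}.\<close>
definition herm_form :: "nat \<Rightarrow> 'a::field vec3 \<Rightarrow> 'a" where
  "herm_form q v = fst v ^ (q + 1) + fst (snd v) ^ (q + 1) + snd (snd v) ^ (q + 1)"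

definition herm_points :: "nat \<Rightarrow> 'a::field vec3 set set" where
  "herm_points q = {span1 v | v. v \<noteq> (0, 0, 0) \<and> herm_form q v = 0}"

definition pg_line :: "'a::field vec3 \<Rightarrow> 'a vec3 set set" where
  "pg_line l = {span1 v | v. v \<noteq> (0, 0, 0) \<and>
      fst l * fst v + fst (snd l) * fst (snd v) + snd (snd l) * snd (snd v) = 0}"

definition herm_lines :: "nat \<Rightarrow> 'a::field vec3 set set set" where
  "herm_lines q = {pg_line l \<inter> herm_points q | l. l \<noteq> (0, 0, 0) \<and>
      card (pg_line l \<inter> herm_points q) = q + 1}"

definition is_fan :: "'p set set \<Rightarrow> bool" where
  "is_fan L \<longleftrightarrow> card L \<ge> 3 \<and> (\<forall>l1\<in>L. \<forall>l2\<in>L. l1 \<inter> l2 \<noteq> {}) \<and>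
     (\<exists>P l0. l0 \<in> L \<and> P \<notin> l0 \<and> (\<forall>l\<in>L - {l0}. P \<in> l))"

end

theory Submission
  imports Defs "HOL-Number_Theory.Residues"
begin


lemma field_power_card_same:
  fixes x :: "'a :: {field,finite}"
  shows "x ^ card (UNIV :: 'a set) = x"
proof (cases "x = 0")
  case False
  have "x * (\<Prod>y\<in>UNIV-{0}. x * y) = x * x ^ (card (UNIV :: 'a set) - 1) * \<Prod>(UNIV-{0})"
    by (simp add: prod.distrib mult_ac)
  also have "x * x ^ (card (UNIV :: 'a set) - 1) = x ^ Suc (card (UNIV :: 'a set) - 1)"
    by (subst power_Suc) auto
  also have "Suc (card (UNIV :: 'a set) - 1) = card (UNIV :: 'a set)"
    using finite_UNIV_card_ge_0[where ?'a = 'a] by simp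
  also have "(\<Prod>y\<in>UNIV-{0}. x * y) = (\<Prod>y\<in>UNIV-{0}. y)"
    by (rule prod.reindex_bij_witness[of _ "\<lambda>y. y / x" "\<lambda>y. x * y"]) (use False in auto)
  finally show ?thesis
    by simp
qed (use finite_UNIV_card_ge_0[where ?'a = 'a] in auto)

lemma frob_facts:
  assumes "prime_power q" "CARD('a::{field,finite}) = q^2"
  shows "\<And>x y::'a. (x+y)^q = x^q + y^q" and "\<And>x::'a. (x^q)^q = x"
proof -
  obtain p k where pk: "prime p" "k \<ge> 1" "q = p ^ k" using assms(1) unfolding prime_power_def by auto
  have cp: "CHAR('a) > 0" by (rule finite_imp_CHAR_pos) simp
  have prc: "prime CHAR('a)" using prime_CHAR_semidom[OF cp] .
  have "CHAR('a) dvd p ^ (2*k)" using CHAR_dvd_CARD[where 'a='a] assms(2) pk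
    by (simp add: power_mult[symmetric] mult.commute)
  hence "CHAR('a) dvd p" using prc prime_dvd_power by blast
  hence cpe: "CHAR('a) = p" using prc pk(1) by (simp add: primes_dvd_imp_eq)
  show "\<And>x y::'a. (x+y)^q = x^q + y^q"
    by (rule freshmans_dream') (use prc cpe pk in auto)
  show "\<And>x::'a. (x^q)^q = x"
  proof -
    fix x :: 'a
    have "(x^q)^q = x ^ (q^2)" by (simp add: power_mult[symmetric] power2_eq_square)
    thus "(x^q)^q = x" using field_power_card_same[of x] assms(2) by simp
  qed
qed



definition dotp :: "'a::field vec3 \<Rightarrow> 'a vec3 \<Rightarrow> 'a" where
  "dotp l v = fst l * fst v + fst (snd l) * fst (snd v) + snd (snd l) * snd (snd v)"
definition crossp :: "'a::field vec3 \<Rightarrow> 'a vec3 \<Rightarrow> 'a vec3" where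
  "crossp u v = (fst (snd u) * snd (snd v) - snd (snd u) * fst (snd v),
                 snd (snd u) * fst v - fst u * snd (snd v),
                 fst u * fst (snd v) - fst (snd u) * fst v)"
definition det3 :: "'a::field vec3 \<Rightarrow> 'a vec3 \<Rightarrow> 'a vec3 \<Rightarrow> 'a" where
  "det3 u v w = dotp u (crossp v w)"
definition scal :: "'a::field \<Rightarrow> 'a vec3 \<Rightarrow> 'a vec3" where
  "scal c v = (c * fst v, c * fst (snd v), c * snd (snd v))"

lemma mem_span1: "x \<in> span1 v \<longleftrightarrow> (\<exists>c. x = scal c v)"
  by (auto simp: span1_def scal_def)

lemma scal_scal: "scal c (scal d v) = scal (c*d) v"
  by (simp add: scal_def mult.assoc)

lemma scal_zero_iff: "scal c v = (0,0,0) \<longleftrightarrow> c = 0 \<or> v = (0,0,0)"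
  by (cases v) (auto simp: scal_def)

lemma span1_scal: "(c::'a::field) \<noteq> 0 \<Longrightarrow> span1 (scal c v) = span1 v"
  apply (auto simp: mem_span1 scal_scal)
  apply (rule_tac x="ca / c" in exI)
  apply (simp add: scal_scal)
  done

lemma span1_eqD:
  assumes "span1 w = span1 v" "w \<noteq> (0,0,0)"
  shows "\<exists>c. c \<noteq> 0 \<and> w = scal c v"
proof -
  have "w \<in> span1 w" unfolding mem_span1 by (rule exI[of _ 1]) (simp add: scal_def)
  then obtain c where "w = scal c v" using assms(1) by (auto simp: mem_span1)
  thus ?thesis using assms(2) by (auto simp: scal_zero_iff)
qed

lemma dotp_scal: "dotp l (scal c v) = c * dotp l v" "dotp (scal c l) v = c * dotp l v"
  by (simp_all add: dotp_def scal_def algebra_simps)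

lemma pg_line_mem:
  assumes "v \<noteq> (0,0,0)"
  shows "span1 v \<in> pg_line l \<longleftrightarrow> dotp l v = 0"
proof
  assume "span1 v \<in> pg_line l"
  then obtain w where w: "span1 v = span1 w" "w \<noteq> (0,0,0)" "dotp l w = 0"
    by (auto simp: pg_line_def dotp_def)
  then obtain c where "v = scal c w" using span1_eqD assms by metis
  thus "dotp l v = 0" using w by (simp add: dotp_scal)
next
  assume "dotp l v = 0" thus "span1 v \<in> pg_line l" using assms
    unfolding pg_line_def dotp_def by blast
qed

lemma herm_form_scal: "herm_form q (scal c v) = c^(q+1) * herm_form q v"
  by (simp add: herm_form_def scal_def power_mult_distrib algebra_simps)

lemma herm_mem:
  assumes "v \<noteq> (0,0,0)"
  shows "span1 v \<in> herm_points q \<longleftrightarrow> herm_form q v = 0"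
proof
  assume "span1 v \<in> herm_points q"
  then obtain w where w: "span1 v = span1 w" "w \<noteq> (0,0,0)" "herm_form q w = 0"
    by (auto simp: herm_points_def)
  then obtain c where "v = scal c w" using span1_eqD assms by metis
  thus "herm_form q v = 0" using w by (simp add: herm_form_scal)
next
  assume "herm_form q v = 0" thus "span1 v \<in> herm_points q" using assms
    unfolding herm_points_def by blast
qed

lemma herm_pointsE:
  assumes "P \<in> herm_points q"
  obtains v where "v \<noteq> (0,0,0)" "herm_form q v = 0" "P = span1 v"
  using assms by (auto simp: herm_points_def)

lemma herm_linesE:
  assumes "m \<in> herm_lines q"
  obtains l where "l \<noteq> (0,0,0)" "m = pg_line l \<inter> herm_points q"
  using assms by (auto simp: herm_lines_def)

lemma parallel:
  fixes m l :: "'a::field vec3"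
  assumes "m \<noteq> (0,0,0)" "crossp m l = (0,0,0)"
  shows "\<exists>t. l = scal t m"
proof -
  obtain m1 m2 m3 where m: "m = (m1,m2,m3)" by (cases m) auto
  obtain l1 l2 l3 where l: "l = (l1,l2,l3)" by (cases l) auto
  have e: "m2*l3 = m3*l2" "m3*l1 = m1*l3" "m1*l2 = m2*l1"
    using assms(2) by (auto simp: crossp_def m l)
  show ?thesis
  proof (cases "m1 = 0")
    case False
    show ?thesis
      apply (rule exI[of _ "l1/m1"])
      using False e by (auto simp: m l scal_def field_simps)
  next
    case z1: True
    show ?thesis
    proof (cases "m2 = 0")
      case False
      show ?thesis
        apply (rule exI[of _ "l2/m2"])
        using False e z1 by (auto simp: m l scal_def field_simps)
    next
      case True
      hence "m3 \<noteq> 0" using z1 assms(1) m by auto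
      thus ?thesis
        apply -
        apply (rule exI[of _ "l3/m3"])
        using True e z1 by (auto simp: m l scal_def field_simps)
    qed
  qed
qed

lemma cross_nz:
  assumes "u \<noteq> (0,0,0)" "v \<noteq> (0,0,0)" "span1 u \<noteq> span1 v"
  shows "crossp u v \<noteq> (0,0,0)"
proof
  assume "crossp u v = (0,0,0)"
  then obtain t where t: "v = scal t u" using parallel assms(1) by blast
  hence "t \<noteq> 0" using assms(2) by (auto simp: scal_def)
  thus False using t assms(3) span1_scal by metis
qed

lemma pg_line_scal:
  assumes "(t::'a::field) \<noteq> 0" shows "pg_line (scal t m) = pg_line m"
proof -
  have "\<And>v. (fst (scal t m) * fst v + fst (snd (scal t m)) * fst (snd v) + snd (snd (scal t m)) * snd (snd v) = 0)
     \<longleftrightarrow> (fst m * fst v + fst (snd m) * fst (snd v) + snd (snd m) * snd (snd v) = 0)"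
  proof -
    fix v
    have "fst (scal t m) * fst v + fst (snd (scal t m)) * fst (snd v) + snd (snd (scal t m)) * snd (snd v)
      = t * (fst m * fst v + fst (snd m) * fst (snd v) + snd (snd m) * snd (snd v))"
      by (simp add: scal_def algebra_simps)
    thus "?thesis v" using assms by simp
  qed
  thus ?thesis unfolding pg_line_def by simp
qed

lemma cross_cross_dot:
  "crossp (crossp u v) l = (dotp u l * fst v - dotp v l * fst u,
     dotp u l * fst (snd v) - dotp v l * fst (snd u), dotp u l * snd (snd v) - dotp v l * snd (snd u))"
  by (simp add: crossp_def scal_def dotp_def algebra_simps)

lemma line_eq:
  assumes "m \<in> herm_lines q" "u \<noteq> (0,0,0)" "v \<noteq> (0,0,0)" "span1 u \<noteq> span1 v"
    "span1 u \<in> m" "span1 v \<in> m"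
  shows "m = pg_line (crossp u v) \<inter> herm_points q"
proof -
  obtain l where l: "l \<noteq> (0,0,0)" "m = pg_line l \<inter> herm_points q"
    using assms(1) herm_linesE by blast
  have "dotp l u = 0" "dotp l v = 0" using assms l pg_line_mem by blast+
  hence "dotp u l = 0" "dotp v l = 0" by (simp_all add: dotp_def mult.commute)
  hence "crossp (crossp u v) l = (0,0,0)" by (simp add: cross_cross_dot)
  then obtain t where t: "l = scal t (crossp u v)" using parallel cross_nz assms by blast
  hence "t \<noteq> 0" using l(1) by (auto simp: scal_def)
  thus ?thesis using l t pg_line_scal by metis
qed

lemma adj_det:
  assumes "l \<noteq> (0,0,0)" "dotp l u = 0" "dotp l v = 0" "dotp l w = 0"
  shows "det3 u v w = 0"
proof -
  obtain l1 l2 l3 where l: "l = (l1,l2,l3)" by (cases l) auto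
  obtain u1 u2 u3 where u: "u = (u1,u2,u3)" by (cases u) auto
  obtain v1 v2 v3 where v: "v = (v1,v2,v3)" by (cases v) auto
  obtain w1 w2 w3 where w: "w = (w1,w2,w3)" by (cases w) auto
  let ?D = "det3 u v w"
  have e: "l1*u1+l2*u2+l3*u3 = 0" "l1*v1+l2*v2+l3*v3 = 0" "l1*w1+l2*w2+l3*w3 = 0"
    using assms by (auto simp: dotp_def l u v w)
  have "?D * l1 = (v2*w3 - v3*w2)*(l1*u1+l2*u2+l3*u3) + (w2*u3-w3*u2)*(l1*v1+l2*v2+l3*v3)
          + (u2*v3-u3*v2)*(l1*w1+l2*w2+l3*w3)"
    "?D * l2 = (v3*w1 - v1*w3)*(l1*u1+l2*u2+l3*u3) + (w3*u1-w1*u3)*(l1*v1+l2*v2+l3*v3)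
          + (u3*v1-u1*v3)*(l1*w1+l2*w2+l3*w3)"
    "?D * l3 = (v1*w2 - v2*w1)*(l1*u1+l2*u2+l3*u3) + (w1*u2-w2*u1)*(l1*v1+l2*v2+l3*v3)
          + (u1*v2-u2*v1)*(l1*w1+l2*w2+l3*w3)"
    by (simp_all add: det3_def dotp_def crossp_def u v w algebra_simps)
  hence "?D * l1 = 0" "?D * l2 = 0" "?D * l3 = 0" using e by simp_all
  thus ?thesis using assms(1) l by auto
qed

lemma cramer:
  "scal (det3 A B C) X = (let a = det3 X B C; b = det3 A X C; c = det3 A B X in
     (a * fst A + b * fst B + c * fst C,
      a * fst (snd A) + b * fst (snd B) + c * fst (snd C),
      a * snd (snd A) + b * snd (snd B) + c * snd (snd C)))"
  by (simp add: Let_def scal_def det3_def dotp_def crossp_def algebra_simps)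



definition hf :: "('a::field \<Rightarrow> 'a) \<Rightarrow> 'a vec3 \<Rightarrow> 'a vec3 \<Rightarrow> 'a" where
  "hf s u v = fst u * s (fst v) + fst (snd u) * s (fst (snd v)) + snd (snd u) * s (snd (snd v))"
definition lin2 :: "'a::field \<Rightarrow> 'a vec3 \<Rightarrow> 'a \<Rightarrow> 'a vec3 \<Rightarrow> 'a vec3" where
  "lin2 a u b v = (a * fst u + b * fst v, a * fst (snd u) + b * fst (snd v), a * snd (snd u) + b * snd (snd v))"

lemma gram:
  fixes pa pb pc qa qb qc ra rb rc ua ub uc va vb vc wa wb wc :: "'a::comm_ring_1"
  shows "let D = pa*(qb*rc-qc*rb) + pb*(qc*ra-qa*rc) + pc*(qa*rb-qb*ra);
    D' = ua*(vb*wc-vc*wb) + ub*(vc*wa-va*wc) + uc*(va*wb-vb*wa);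
    h11 = pa*ua+pb*ub+pc*uc; h12 = pa*va+pb*vb+pc*vc; h13 = pa*wa+pb*wb+pc*wc;
    h21 = qa*ua+qb*ub+qc*uc; h22 = qa*va+qb*vb+qc*vc; h23 = qa*wa+qb*wb+qc*wc;
    h31 = ra*ua+rb*ub+rc*uc; h32 = ra*va+rb*vb+rc*vc; h33 = ra*wa+rb*wb+rc*wc in
    h11*(h22*h33-h23*h32) - h12*(h21*h33-h23*h31) + h13*(h21*h32-h22*h31) = D * D'"
  unfolding Let_def by (simp add: algebra_simps)

locale sig =
  fixes s :: "'a::field \<Rightarrow> 'a"
  assumes sadd: "\<And>x y. s (x + y) = s x + s y"
    and smult: "\<And>x y. s (x * y) = s x * s y"
    and sinv: "\<And>x. s (s x) = x"
begin

lemma s0: "s 0 = 0"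
proof -
  have "s 0 + s 0 = s 0 + 0" using sadd[of 0 0] by simp
  thus ?thesis by (metis add_left_cancel)
qed

lemma sneg: "s (- x) = - s x"
proof -
  have "s x + s (- x) = 0" using sadd[of x "-x"] s0 by simp
  thus ?thesis by (metis add.commute eq_neg_iff_add_eq_0)
qed

lemma ssub: "s (x - y) = s x - s y"
  using sadd[of x "-y"] sneg by simp

lemma snz: "x \<noteq> 0 \<Longrightarrow> s x \<noteq> 0"
  using sinv s0 by metis

lemma hf_lin2:
  "hf s (lin2 a B b C) (lin2 a B b C) =
     a * s a * hf s B B + a * s b * hf s B C + b * s a * hf s C B + b * s b * hf s C C"
  by (simp add: hf_def lin2_def sadd smult algebra_simps)

lemma hf_swap: "hf s C B = s (hf s B C)"
  by (simp add: hf_def sadd smult sinv mult.commute)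

lemma s_det: "s (det3 A B C) =
   det3 (s (fst A), s (fst (snd A)), s (snd (snd A))) (s (fst B), s (fst (snd B)), s (snd (snd B)))
        (s (fst C), s (fst (snd C)), s (snd (snd C)))"
  by (simp add: det3_def dotp_def crossp_def sadd smult ssub)

lemma gram_hf:
  assumes "hf s A A = 0" "hf s B B = 0" "hf s C C = 0"
  shows "hf s A B * hf s B C * hf s C A + s (hf s A B * hf s B C * hf s C A)
     = det3 A B C * s (det3 A B C)"
proof -
  obtain a1 a2 a3 where a: "A = (a1,a2,a3)" by (cases A) auto
  obtain b1 b2 b3 where b: "B = (b1,b2,b3)" by (cases B) auto
  obtain c1 c2 c3 where c: "C = (c1,c2,c3)" by (cases C) auto
  have g: "hf s A A * (hf s B B * hf s C C - hf s B C * hf s C B) - hf s A B * (hf s B A * hf s C C - hf s B C * hf s C A)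
      + hf s A C * (hf s B A * hf s C B - hf s B B * hf s C A) = det3 A B C * s (det3 A B C)"
    using gram[where pa=a1 and pb=a2 and pc=a3 and qa=b1 and qb=b2 and qc=b3 and ra=c1 and rb=c2 and rc=c3 and ua="s a1" and ub="s a2" and uc="s a3" and va="s b1" and vb="s b2" and vc="s b3" and wa="s c1" and wb="s c2" and wc="s c3"]
    unfolding s_det by (simp add: a b c hf_def det3_def dotp_def crossp_def Let_def)
  have "s (hf s A B * hf s B C * hf s C A) = hf s B A * hf s C B * hf s A C"
    by (simp add: smult hf_swap[symmetric])
  thus ?thesis using g assms by (simp add: algebra_simps)
qed

lemma core:
  assumes hA: "hf s A A = 0" and hB: "hf s B B = 0" and hC: "hf s C C = 0"
    and D: "det3 A B C \<noteq> 0"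
    and hX: "hf s (lin2 x2 B x3 C) (lin2 x2 B x3 C) = 0"
    and hY: "hf s (lin2 y1 A y3 C) (lin2 y1 A y3 C) = 0"
    and hZ: "hf s (lin2 z1 A z2 B) (lin2 z1 A z2 B) = 0"
    and men: "x2*y3*z1 + x3*y1*z2 = 0" and w: "x3*y1*z2 \<noteq> 0"
  shows False
proof -
  define al where "al = hf s A B"
  define be where "be = hf s B C"
  define ga where "ga = hf s C A"
  define k1 where "k1 = x2 * s x3 * be"
  define k2 where "k2 = y3 * s y1 * ga"
  define k3 where "k3 = z1 * s z2 * al"
  have sk1: "s k1 = - k1"
  proof -
    have "k1 + s k1 = 0" using hX unfolding hf_lin2 k1_def be_def
      by (simp add: hB hC hf_swap[of B C] smult sinv algebra_simps)
    thus ?thesis by (simp add: eq_neg_iff_add_eq_0 add.commute)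
  qed
  have sk2: "s k2 = - k2"
  proof -
    have "k2 + s k2 = 0" using hY unfolding hf_lin2 k2_def ga_def
      by (simp add: hA hC hf_swap[of A C] smult sinv algebra_simps)
    thus ?thesis by (simp add: eq_neg_iff_add_eq_0 add.commute)
  qed
  have sk3: "s k3 = - k3"
  proof -
    have "k3 + s k3 = 0" using hZ unfolding hf_lin2 k3_def al_def
      by (simp add: hA hB hf_swap[of B A] smult sinv algebra_simps)
    thus ?thesis by (simp add: eq_neg_iff_add_eq_0 add.commute)
  qed
  define W where "W = x3*y1*z2"
  define T where "T = al * be * ga"
  have "k1 * k2 * k3 = (x2*y3*z1) * s W * T"
    by (simp add: k1_def k2_def k3_def W_def T_def smult algebra_simps)
  also have "x2*y3*z1 = - W" using men W_def by (simp add: eq_neg_iff_add_eq_0)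
  finally have K: "k1 * k2 * k3 = - (W * s W * T)" by simp
  have "s (k1 * k2 * k3) = - (k1 * k2 * k3)" by (simp add: smult sk1 sk2 sk3)
  hence "- s (W * s W * T) = W * s W * T" unfolding K by (simp add: sneg)
  hence "s (W * s W * T) = - (W * s W * T)" by (metis minus_minus)
  hence "W * s W * (s T + T) = 0" by (simp add: smult sinv algebra_simps)
  moreover have "W \<noteq> 0" "s W \<noteq> 0" using w W_def snz by auto
  ultimately have "T + s T = 0" by (simp add: add.commute)
  moreover have "T + s T = det3 A B C * s (det3 A B C)"
    unfolding T_def al_def be_def ga_def by (rule gram_hf[OF hA hB hC])
  ultimately show False using D snz by simp
qed

end



lemma cramerA: "det3 X B C = 0 \<Longrightarrow> scal (det3 A B C) X = lin2 (det3 A X C) B (det3 A B X) C"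
  using cramer[of A B C X] by (simp add: Let_def lin2_def)
lemma cramerB: "det3 A X C = 0 \<Longrightarrow> scal (det3 A B C) X = lin2 (det3 X B C) A (det3 A B X) C"
  using cramer[of A B C X] by (simp add: Let_def lin2_def)
lemma cramerC: "det3 A B X = 0 \<Longrightarrow> scal (det3 A B C) X = lin2 (det3 X B C) A (det3 A X C) B"
  using cramer[of A B C X] by (simp add: Let_def lin2_def)

lemma det_lin2:
  "det3 (lin2 x2 B x3 C) (lin2 y1 A y3 C) (lin2 z1 A z2 B) = (x2*y3*z1 + x3*y1*z2) * det3 A B C"
  by (simp add: lin2_def det3_def dotp_def crossp_def algebra_simps)

lemma det_scal: "det3 (scal c X) (scal c Y) (scal c Z) = c^3 * det3 X Y Z"
  by (simp add: scal_def det3_def dotp_def crossp_def algebra_simps power3_eq_cube)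

lemma lin2_0: "lin2 x B 0 C = scal x B" "lin2 0 B x C = scal x C"
  by (simp_all add: lin2_def scal_def)

lemma hf_scal: "hf s (scal c v) (scal c v) = c * s c * hf s v v" if "\<And>x y. s (x*y) = s x * s y"
  by (simp add: hf_def scal_def that algebra_simps)

lemma scal_span:
  assumes "D \<noteq> 0" "p \<noteq> (0,0,0)" "scal D p = scal x r"
  shows "span1 p = span1 r"
proof -
  have "x \<noteq> 0" using assms by (cases p) (auto simp: scal_def)
  have "p = scal (x / D) r" using assms(1,3)
    by (cases p, cases r) (auto simp: scal_def field_simps)
  thus ?thesis using \<open>x \<noteq> 0\<close> assms(1) span1_scal by (metis divide_eq_0_iff)
qed

lemma dotp_comm: "dotp u v = dotp v u"
  by (simp add: dotp_def mult.commute)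

lemma herm_lines_sub: "m \<in> herm_lines q \<Longrightarrow> m \<subseteq> herm_points q"
  by (auto simp: herm_lines_def)

lemma meet_le1:
  assumes "l \<in> herm_lines q" "m \<in> herm_lines q" "l \<noteq> m" "X \<in> l" "X \<in> m" "Y \<in> l" "Y \<in> m"
  shows "X = Y"
proof (rule ccontr)
  assume ne: "X \<noteq> Y"
  obtain u where u: "u \<noteq> (0,0,0)" "X = span1 u" using herm_lines_sub assms herm_pointsE by (metis subsetD)
  obtain v where v: "v \<noteq> (0,0,0)" "Y = span1 v" using herm_lines_sub assms herm_pointsE by (metis subsetD)
  have "l = pg_line (crossp u v) \<inter> herm_points q" using line_eq[OF assms(1) u(1) v(1)] ne u v assms by auto
  moreover have "m = pg_line (crossp u v) \<inter> herm_points q" using line_eq[OF assms(2) u(1) v(1)] ne u v assms by auto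
  ultimately show False using assms(3) by simp
qed

lemma onan:
  fixes a b c d :: "'a::field vec3 set set"
  assumes fr: "\<And>x y::'a. (x+y)^q = x^q + y^q" and fi: "\<And>x::'a. (x^q)^q = x"
    and L: "a \<in> herm_lines q" "b \<in> herm_lines q" "c \<in> herm_lines q" "d \<in> herm_lines q"
    and ab: "a \<noteq> b" and cd: "c \<noteq> d"
    and P: "P \<in> a" "P \<in> b" "P \<notin> c" "P \<notin> d"
    and Q: "Q \<in> c" "Q \<in> d" "Q \<notin> a" "Q \<notin> b"
    and I: "a \<inter> c \<noteq> {}" "a \<inter> d \<noteq> {}" "b \<inter> c \<noteq> {}" "b \<inter> d \<noteq> {}"
  shows False
proof -
  interpret sig "\<lambda>x::'a. x ^ q"
    by standard (simp_all add: fr fi power_mult_distrib)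
  have hh: "herm_form q v = hf (\<lambda>x. x ^ q) v v" for v :: "'a vec3"
    by (simp add: herm_form_def hf_def)
  obtain R1 where R1: "R1 \<in> a" "R1 \<in> c" using I by blast
  obtain R2 where R2: "R2 \<in> a" "R2 \<in> d" using I by blast
  obtain R3 where R3: "R3 \<in> b" "R3 \<in> c" using I by blast
  obtain R4 where R4: "R4 \<in> b" "R4 \<in> d" using I by blast
  have pts: "\<And>X m. X \<in> m \<Longrightarrow> m \<in> herm_lines q \<Longrightarrow> \<exists>v. v \<noteq> (0,0,0) \<and> herm_form q v = 0 \<and> X = span1 v"
    using herm_lines_sub herm_pointsE by (metis subsetD)
  obtain p where p: "p \<noteq> (0,0,0)" "herm_form q p = 0" "P = span1 p" using pts P L by metis
  obtain qq where qq: "qq \<noteq> (0,0,0)" "herm_form q qq = 0" "Q = span1 qq" using pts Q L by metis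
  obtain r1 where r1: "r1 \<noteq> (0,0,0)" "herm_form q r1 = 0" "R1 = span1 r1" using pts R1 L by metis
  obtain r2 where r2: "r2 \<noteq> (0,0,0)" "herm_form q r2 = 0" "R2 = span1 r2" using pts R2 L by metis
  obtain r3 where r3: "r3 \<noteq> (0,0,0)" "herm_form q r3 = 0" "R3 = span1 r3" using pts R3 L by metis
  obtain r4 where r4: "r4 \<noteq> (0,0,0)" "herm_form q r4 = 0" "R4 = span1 r4" using pts R4 L by metis
  obtain la where la: "la \<noteq> (0,0,0)" "a = pg_line la \<inter> herm_points q" using L herm_linesE by metis
  obtain lb where lb: "lb \<noteq> (0,0,0)" "b = pg_line lb \<inter> herm_points q" using L herm_linesE by metis
  obtain lc where lc: "lc \<noteq> (0,0,0)" "c = pg_line lc \<inter> herm_points q" using L herm_linesE by metis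
  obtain ld where ld: "ld \<noteq> (0,0,0)" "d = pg_line ld \<inter> herm_points q" using L herm_linesE by metis
  have dz: "\<And>X v l m. X \<in> m \<Longrightarrow> m = pg_line l \<inter> herm_points q \<Longrightarrow> X = span1 v \<Longrightarrow> v \<noteq> (0,0,0) \<Longrightarrow> dotp l v = 0"
    using pg_line_mem by blast
  have R12: "R1 \<noteq> R2"
  proof
    assume "R1 = R2"
    hence "R1 = Q" using meet_le1[OF L(3) L(4) cd] R1 R2 Q by blast
    thus False using R1 Q by simp
  qed
  define D where "D = det3 qq r1 r2"
  have D0: "D \<noteq> 0"
  proof
    assume "D = 0"
    have "a = pg_line (crossp r1 r2) \<inter> herm_points q"
      using line_eq[OF L(1) r1(1) r2(1)] R12 r1 r2 R1 R2 by simp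
    moreover have "span1 qq \<in> pg_line (crossp r1 r2)"
      using \<open>D = 0\<close> pg_line_mem[OF qq(1)] unfolding D_def det3_def by (simp add: dotp_comm)
    moreover have "span1 qq \<in> herm_points q" using herm_mem qq by blast
    ultimately show False using Q qq by simp
  qed
  have c1: "det3 p r1 r2 = 0"
    by (rule adj_det[OF la(1)]) (use dz[OF P(1) la(2) p(3) p(1)] dz[OF R1(1) la(2) r1(3) r1(1)] dz[OF R2(1) la(2) r2(3) r2(1)] in auto)
  have c2: "det3 qq r4 r2 = 0"
    by (rule adj_det[OF ld(1)]) (use dz[OF Q(2) ld(2) qq(3) qq(1)] dz[OF R4(2) ld(2) r4(3) r4(1)] dz[OF R2(2) ld(2) r2(3) r2(1)] in auto)
  have c3: "det3 qq r1 r3 = 0"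
    by (rule adj_det[OF lc(1)]) (use dz[OF Q(1) lc(2) qq(3) qq(1)] dz[OF R1(2) lc(2) r1(3) r1(1)] dz[OF R3(2) lc(2) r3(3) r3(1)] in auto)
  have c4: "det3 p r4 r3 = 0"
    by (rule adj_det[OF lb(1)]) (use dz[OF P(2) lb(2) p(3) p(1)] dz[OF R4(1) lb(2) r4(3) r4(1)] dz[OF R3(1) lb(2) r3(3) r3(1)] in auto)
  define x2 where "x2 = det3 qq p r2"
  define x3 where "x3 = det3 qq r1 p"
  define y1 where "y1 = det3 r4 r1 r2"
  define y3 where "y3 = det3 qq r1 r4"
  define z1 where "z1 = det3 r3 r1 r2"
  define z2 where "z2 = det3 qq r3 r2"
  have eX: "scal D p = lin2 x2 r1 x3 r2" unfolding D_def x2_def x3_def by (rule cramerA[OF c1])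
  have eY: "scal D r4 = lin2 y1 qq y3 r2" unfolding D_def y1_def y3_def
    by (rule cramerB) (simp add: c2)
  have eZ: "scal D r3 = lin2 z1 qq z2 r1" unfolding D_def z1_def z2_def by (rule cramerC[OF c3])
  have x3: "x3 \<noteq> 0"
  proof
    assume "x3 = 0"
    hence "scal D p = scal x2 r1" using eX by (simp add: lin2_0)
    hence "P = R1" using scal_span[OF D0 p(1)] p r1 by simp
    thus False using P R1 by simp
  qed
  have y1: "y1 \<noteq> 0"
  proof
    assume "y1 = 0"
    hence "scal D r4 = scal y3 r2" using eY by (simp add: lin2_0)
    hence "R4 = R2" using scal_span[OF D0 r4(1)] r4 r2 by simp
    hence "R2 = P" using meet_le1[OF L(1) L(2) ab] R2 R4 P by blast
    thus False using P R2 by simp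
  qed
  have z2: "z2 \<noteq> 0"
  proof
    assume "z2 = 0"
    hence "scal D r3 = scal z1 qq" using eZ by (simp add: lin2_0)
    hence "R3 = Q" using scal_span[OF D0 r3(1)] r3 qq by simp
    thus False using Q R3 by simp
  qed
  have men: "x2*y3*z1 + x3*y1*z2 = 0"
  proof -
    have "det3 (scal D p) (scal D r4) (scal D r3) = (x2*y3*z1 + x3*y1*z2) * D"
      unfolding eX eY eZ unfolding D_def by (rule det_lin2)
    moreover have "det3 (scal D p) (scal D r4) (scal D r3) = 0" by (simp add: det_scal c4)
    ultimately show ?thesis using D0 by simp
  qed
  have hs: "\<And>v. herm_form q v = 0 \<Longrightarrow> hf (\<lambda>x. x ^ q) (scal D v) (scal D v) = 0"
    by (simp add: hf_scal power_mult_distrib hh)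
  show False
  proof (rule core[of qq r1 r2 x2 x3 y1 y3 z1 z2])
    show "hf (\<lambda>x. x ^ q) qq qq = 0" "hf (\<lambda>x. x ^ q) r1 r1 = 0" "hf (\<lambda>x. x ^ q) r2 r2 = 0"
      using qq r1 r2 hh by auto
    show "det3 qq r1 r2 \<noteq> 0" using D0 D_def by simp
    show "hf (\<lambda>x. x ^ q) (lin2 x2 r1 x3 r2) (lin2 x2 r1 x3 r2) = 0" using hs[OF p(2)] eX by simp
    show "hf (\<lambda>x. x ^ q) (lin2 y1 qq y3 r2) (lin2 y1 qq y3 r2) = 0" using hs[OF r4(2)] eY by simp
    show "hf (\<lambda>x. x ^ q) (lin2 z1 qq z2 r1) (lin2 z1 qq z2 r1) = 0" using hs[OF r3(2)] eZ by simp
    show "x2*y3*z1 + x3*y1*z2 = 0" by (rule men)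
    show "x3*y1*z2 \<noteq> 0" using x3 y1 z2 by simp
  qed
qed



lemma comb:
  fixes L :: "'p set set"
  assumes M: "\<And>l m X Y. l \<in> L \<Longrightarrow> m \<in> L \<Longrightarrow> l \<noteq> m \<Longrightarrow> X \<in> l \<Longrightarrow> X \<in> m \<Longrightarrow> Y \<in> l \<Longrightarrow> Y \<in> m \<Longrightarrow> X = Y"
    and O: "\<And>a b c d P Q. a \<in> L \<Longrightarrow> b \<in> L \<Longrightarrow> c \<in> L \<Longrightarrow> d \<in> L \<Longrightarrow> a \<noteq> b \<Longrightarrow> c \<noteq> d \<Longrightarrow>
       P \<in> a \<Longrightarrow> P \<in> b \<Longrightarrow> P \<notin> c \<Longrightarrow> P \<notin> d \<Longrightarrow> Q \<in> c \<Longrightarrow> Q \<in> d \<Longrightarrow> Q \<notin> a \<Longrightarrow> Q \<notin> b \<Longrightarrow> False"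
    and I: "\<forall>l1\<in>L. \<forall>l2\<in>L. l1 \<inter> l2 \<noteq> {}" and C: "card L \<ge> 3"
  shows "(\<exists>P. \<forall>l\<in>L. P \<in> l) \<or> is_fan L"
proof (rule ccontr)
  assume "\<not> ((\<exists>P. \<forall>l\<in>L. P \<in> l) \<or> is_fan L)"
  hence nc: "\<And>P. \<exists>l\<in>L. P \<notin> l" and nf0: "\<not> is_fan L" by auto
  have nf: "\<And>P l0. l0 \<in> L \<Longrightarrow> P \<notin> l0 \<Longrightarrow> \<exists>l\<in>L. l \<noteq> l0 \<and> P \<notin> l"
    using nf0 C I unfolding is_fan_def by blast
  have star: False if x: "x \<in> L" "c \<in> L" "d \<in> L" "x \<noteq> c" "x \<noteq> d" "c \<noteq> d"
    and Q: "Q \<in> x" "Q \<in> c" "Q \<in> d" and y: "y \<in> L" "e \<in> L" "y \<noteq> e" "Q \<notin> y" "Q \<notin> e" for x c d y e Q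
  proof -
    obtain R where R: "R \<in> y" "R \<in> e" using I y by blast
    show False
    proof (cases "R \<in> x")
      case True
      hence "R \<notin> c" "R \<notin> d" using M[of x c R Q] M[of x d R Q] x Q R y by auto
      thus False using O[of y e c d R Q] x y R Q by auto
    next
      case False
      show False
      proof (cases "R \<in> c")
        case True
        hence "R \<notin> d" using M[of c d R Q] x Q R y by auto
        thus False using O[of y e x d R Q] x y R Q False by auto
      next
        case nc2: False
        thus False using O[of y e x c R Q] x y R Q False by auto
      qed
    qed
  qed
  have fin: "finite L" using C by (metis card.infinite not_numeral_le_zero)
  obtain a where a: "a \<in> L" using C by fastforce
  have "card (L - {a}) \<ge> 2" using C a fin by (simp add: card_Diff_singleton)
  hence "L - {a} \<noteq> {}" by (metis card.empty not_numeral_le_zero)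
  then obtain b where b: "b \<in> L" "b \<noteq> a" by blast
  obtain P where P: "P \<in> a" "P \<in> b" using I a b by blast
  obtain c where c: "c \<in> L" "P \<notin> c" using nc by blast
  obtain d where d: "d \<in> L" "d \<noteq> c" "P \<notin> d" using nf[OF c] by blast
  obtain Q where Q: "Q \<in> c" "Q \<in> d" using I c d by blast
  have ac: "a \<noteq> c" "a \<noteq> d" "b \<noteq> c" "b \<noteq> d" using P c d by auto
  show False
  proof (cases "Q \<in> a")
    case True
    hence "Q \<notin> b" using M[of a b Q P] a b P Q c by auto
    then obtain e where e: "e \<in> L" "e \<noteq> b" "Q \<notin> e" using nf b by blast
    show False using star[of a c d Q b e] a b c d e Q ac True \<open>Q \<notin> b\<close> by auto
  next
    case na: False
    show False
    proof (cases "Q \<in> b")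
      case True
      then obtain e where e: "e \<in> L" "e \<noteq> a" "Q \<notin> e" using nf a na by blast
      show False using star[of b c d Q a e] a b c d e Q ac True na by auto
    next
      case False
      show False using O[of a b c d P Q] a b c d P Q na False by auto
    qed
  qed
qed


theorem lemma3p1:
  fixes q :: nat and L :: "('a::{field,finite}) vec3 set set set"
  assumes "prime_power q"
    and "CARD('a) = q ^ 2"
    and "L \<subseteq> herm_lines q"
    and "card L \<ge> 3"
    and "\<forall>l1\<in>L. \<forall>l2\<in>L. l1 \<inter> l2 \<noteq> {}"
  shows "(\<exists>P\<in>herm_points q. \<forall>l\<in>L. P \<in> l) \<or> is_fan L"
proof -
  note fr = frob_facts(1)[OF assms(1,2)]
  note fi = frob_facts(2)[OF assms(1,2)]
  have "(\<exists>P. \<forall>l\<in>L. P \<in> l) \<or> is_fan L"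
  proof (rule comb)
    show "\<And>l m X Y. l \<in> L \<Longrightarrow> m \<in> L \<Longrightarrow> l \<noteq> m \<Longrightarrow> X \<in> l \<Longrightarrow> X \<in> m \<Longrightarrow> Y \<in> l \<Longrightarrow> Y \<in> m \<Longrightarrow> X = Y"
      using meet_le1 assms(3) by blast
    show "\<And>a b c d P Q. a \<in> L \<Longrightarrow> b \<in> L \<Longrightarrow> c \<in> L \<Longrightarrow> d \<in> L \<Longrightarrow> a \<noteq> b \<Longrightarrow> c \<noteq> d \<Longrightarrow>
       P \<in> a \<Longrightarrow> P \<in> b \<Longrightarrow> P \<notin> c \<Longrightarrow> P \<notin> d \<Longrightarrow> Q \<in> c \<Longrightarrow> Q \<in> d \<Longrightarrow> Q \<notin> a \<Longrightarrow> Q \<notin> b \<Longrightarrow> False"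
    proof -
      fix a b c d P Q
      assume h: "a \<in> L" "b \<in> L" "c \<in> L" "d \<in> L" "a \<noteq> b" "c \<noteq> d"
       "P \<in> a" "P \<in> b" "P \<notin> c" "P \<notin> d" "Q \<in> c" "Q \<in> d" "Q \<notin> a" "Q \<notin> b"
      show False
        by (rule onan[OF fr fi, of a b c d P Q]) (use h assms(3,5) in auto)
    qed
  qed (use assms(4,5) in auto)
  thus ?thesis
  proof
    assume "\<exists>P. \<forall>l\<in>L. P \<in> l"
    then obtain P where P: "\<forall>l\<in>L. P \<in> l" by blast
    have "L \<noteq> {}" using assms(4) by auto
    then obtain l where "l \<in> L" by blast
    hence "P \<in> herm_points q" using P assms(3) herm_lines_sub by blast
    thus ?thesis using P by blast
  qed simp
qed

end
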